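(* Let $\mathcal H$ be a separable complex Hilbert space, $A_1,A_2\in L(\mathcal H)^+$, $B\in L(\mathcal H)$ with closed range. If $G\in L(\mathcal H)$ is an $A_1A_2$-inverse of $B$, then (1) $A_1BGB=A_1B$ and $A_1BG=(BG)^*A_1$; (2) $A_2GBG=A_2G$ and $A_2GB=(GB)^*A_2$.
   Context: $\|z\|_{A}=\langle Az,z\rangle^{1/2}$ for $A\in L(\mathcal H)^+$. For $y\in\mathcal H$, $x_0$ is an $A_1$-least squares solution ($A_1$-LSS) of $Bx=y$ if $\|y-Bx_0\|_{A_1}\le\|y-Bx\|_{A_1}$ for all $x\in\mathcal H$. $G$ is an $A_1$-inverse of $B$ if $Gy$ is an $A_1$-LSS of $Bx=y$ for every $y$. $G$ is an $A_1A_2$-inverse of $B$ if $G$ is an $A_1$-inverse of $B$ and, for each $y\in\mathcal H$, $\|Gy\|_{A_2}\le\|x_0\|_{A_2}$ for every $A_1$-LSS $x_0$ of $Bx=y$. *)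

theory Defs
  imports "HOL-Analysis.Analysis"
begin

text \<open>No complex Hilbert space class exists in the distribution, so we introduce one:
  a real Banach space carrying a complex scalar multiplication (compatible with the real one)
  and a complex inner product (linear in the first, conjugate linear in the second argument)
  inducing the given norm.\<close>

class complex_hilbert_space = banach +
  fixes scaleC :: "complex \<Rightarrow> 'a \<Rightarrow> 'a"
    and cinner :: "'a \<Rightarrow> 'a \<Rightarrow> complex"
  assumes scaleC_add_right: "scaleC a (x + y) = scaleC a x + scaleC a y"
    and scaleC_add_left: "scaleC (a + b) x = scaleC a x + scaleC b x"
    and scaleC_scaleC: "scaleC a (scaleC b x) = scaleC (a * b) x"
    and scaleC_one: "scaleC 1 x = x"
    and scaleR_scaleC: "scaleR r x = scaleC (complex_of_real r) x"
    and cinner_conj_sym: "cinner x y = cnj (cinner y x)"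
    and cinner_add_left: "cinner (x + y) z = cinner x z + cinner y z"
    and cinner_scaleC_left: "cinner (scaleC a x) y = a * cinner x y"
    and cinner_pos: "0 \<le> Re (cinner x x)"
    and cinner_eq_zero_iff: "cinner x x = 0 \<longleftrightarrow> x = 0"
    and norm_eq_sqrt_cinner: "norm x = sqrt (Re (cinner x x))"

definition bounded_clinear_op :: "('a::complex_hilbert_space \<Rightarrow> 'a) \<Rightarrow> bool" where
  "bounded_clinear_op T \<longleftrightarrow>
     (\<forall>x y. T (x + y) = T x + T y) \<and>
     (\<forall>c x. T (scaleC c x) = scaleC c (T x)) \<and>
     (\<exists>K. \<forall>x. norm (T x) \<le> norm x * K)"

definition positive_op :: "('a::complex_hilbert_space \<Rightarrow> 'a) \<Rightarrow> bool" where
  "positive_op A \<longleftrightarrow> bounded_clinear_op A \<and>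
     (\<forall>z. Im (cinner (A z) z) = 0 \<and> 0 \<le> Re (cinner (A z) z))"

definition adjoint_op :: "('a::complex_hilbert_space \<Rightarrow> 'a) \<Rightarrow> ('a \<Rightarrow> 'a)" where
  "adjoint_op T = (SOME S. \<forall>x y. cinner (T x) y = cinner x (S y))"

definition A_seminorm :: "('a::complex_hilbert_space \<Rightarrow> 'a) \<Rightarrow> 'a \<Rightarrow> real" where
  "A_seminorm A z = sqrt (Re (cinner (A z) z))"

definition is_A_LSS :: "('a::complex_hilbert_space \<Rightarrow> 'a) \<Rightarrow> ('a \<Rightarrow> 'a) \<Rightarrow> 'a \<Rightarrow> 'a \<Rightarrow> bool" where
  "is_A_LSS A B y x0 \<longleftrightarrow> (\<forall>x. A_seminorm A (y - B x0) \<le> A_seminorm A (y - B x))"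

definition is_A_inverse :: "('a::complex_hilbert_space \<Rightarrow> 'a) \<Rightarrow> ('a \<Rightarrow> 'a) \<Rightarrow> ('a \<Rightarrow> 'a) \<Rightarrow> bool" where
  "is_A_inverse A B G \<longleftrightarrow> (\<forall>y. is_A_LSS A B y (G y))"

definition is_AA_inverse ::
  "('a::complex_hilbert_space \<Rightarrow> 'a) \<Rightarrow> ('a \<Rightarrow> 'a) \<Rightarrow> ('a \<Rightarrow> 'a) \<Rightarrow> ('a \<Rightarrow> 'a) \<Rightarrow> bool" where
  "is_AA_inverse A1 A2 B G \<longleftrightarrow> is_A_inverse A1 B G \<and>
     (\<forall>y x0. is_A_LSS A1 B y x0 \<longrightarrow> A_seminorm A2 (G y) \<le> A_seminorm A2 x0)"

end

theory Submission
  imports Defs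
begin

lemma cinner_add_right: "cinner x (y + z) = cinner x y + cinner x (z::'a::complex_hilbert_space)"
  by (metis cinner_conj_sym cinner_add_left complex_cnj_add)

lemma cinner_scaleC_right: "cinner x (scaleC a y) = cnj a * cinner x (y::'a::complex_hilbert_space)"
  by (metis cinner_conj_sym cinner_scaleC_left complex_cnj_mult)

lemma cinner_zero_left[simp]: "cinner 0 (y::'a::complex_hilbert_space) = 0"
  using cinner_add_left[of "0::'a" 0 y] by simp

lemma cinner_zero_right[simp]: "cinner y (0::'a::complex_hilbert_space) = 0"
  by (metis cinner_conj_sym cinner_zero_left complex_cnj_zero)

lemma cinner_minus_left: "cinner (- x) (y::'a::complex_hilbert_space) = - cinner x y"
  using cinner_add_left[of x "-x" y] by (simp add: eq_neg_iff_add_eq_0 add.commute)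

lemma cinner_diff_left: "cinner (x - z) (y::'a::complex_hilbert_space) = cinner x y - cinner z y"
  using cinner_add_left[of x "-z" y] cinner_minus_left[of z y] by simp

lemma cinner_minus_right: "cinner y (- x) = - cinner y (x::'a::complex_hilbert_space)"
  by (metis cinner_conj_sym cinner_minus_left complex_cnj_minus)

lemma cinner_diff_right: "cinner y (x - z) = cinner y x - cinner y (z::'a::complex_hilbert_space)"
  by (metis cinner_conj_sym cinner_diff_left complex_cnj_diff)

lemma scaleC_zero_left[simp]: "scaleC 0 (x::'a::complex_hilbert_space) = 0"
  by (metis scaleR_scaleC scaleR_zero_left of_real_0)

lemma scaleC_zero_right[simp]: "scaleC c (0::'a::complex_hilbert_space) = 0"
  using scaleC_add_right[of c "0::'a" 0] by simp

lemma cinner_self: "cinner x (x::'a::complex_hilbert_space) = complex_of_real ((norm x)^2)"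
proof -
  have "Im (cinner x x) = 0" by (metis cinner_conj_sym cnj.sel(2) neg_equal_zero)
  moreover have "Re (cinner x x) = (norm x)^2" using norm_eq_sqrt_cinner[of x] cinner_pos[of x] by simp
  ultimately show ?thesis by (simp add: complex_eq_iff)
qed

lemma cinner_eq_all: "(\<And>x. cinner x a = cinner x b) \<Longrightarrow> a = (b::'a::complex_hilbert_space)"
  by (metis cinner_diff_right cinner_eq_zero_iff eq_iff_diff_eq_0)

lemma cauchy_schwarz: "cmod (cinner x y) \<le> norm x * norm (y::'a::complex_hilbert_space)"
proof (cases "y = 0")
  case True then show ?thesis by simp
next
  case False
  define a where "a = cinner x y"
  define b where "b = (norm y)^2"
  have bpos: "b > 0" using False b_def by simp
  define c where "c = a / complex_of_real b"
  have yx: "cinner y x = cnj a" using a_def cinner_conj_sym by metis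
  have yy: "cinner y y = complex_of_real b" using cinner_self b_def by metis
  have e1: "cinner (x - scaleC c y) (x - scaleC c y) = cinner x x - cinner (scaleC c y) x
      - (cinner x (scaleC c y) - cinner (scaleC c y) (scaleC c y))"
    by (simp only: cinner_diff_left cinner_diff_right)
  have e2: "cinner x (scaleC c y) = cnj c * a" unfolding a_def by (rule cinner_scaleC_right)
  have e3: "cinner (scaleC c y) x = c * cnj a" by (simp only: cinner_scaleC_left yx)
  have e4: "cinner (scaleC c y) (scaleC c y) = cnj c * (c * complex_of_real b)"
    by (simp only: cinner_scaleC_left cinner_scaleC_right yy)
  have bnz: "complex_of_real b \<noteq> 0" using bpos by simp
  have cb: "c * complex_of_real b = a" unfolding c_def using bnz by simp
  have e5: "cnj c * a - cnj c * (c * complex_of_real b) = 0" by (simp only: cb diff_self)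
  have e6: "c * cnj a = a * cnj a / complex_of_real b" unfolding c_def by simp
  have F0: "cinner (x - scaleC c y) (x - scaleC c y) = cinner x x - c * cnj a - 0"
    by (simp only: e1 e2 e3 e4 e5)
  have ac: "a * cnj a = complex_of_real ((cmod a)^2)" by (rule complex_norm_square[symmetric])
  have F: "cinner (x - scaleC c y) (x - scaleC c y) =
      complex_of_real ((norm x)^2) - complex_of_real ((cmod a)^2) / complex_of_real b"
    by (subst F0, subst e6, subst ac, subst cinner_self[of x]) simp
  have "Re (cinner (x - scaleC c y) (x - scaleC c y)) = (norm x)^2 - (cmod a)^2 / b"
    unfolding F by simp
  note R = this
  have "(cmod a)^2 / b \<le> (norm x)^2" using cinner_pos[of "x - scaleC c y"] R by linarith
  hence "(cmod a)^2 \<le> (norm x)^2 * b" by (simp only: pos_divide_le_eq[OF bpos])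
  hence "(cmod a)^2 \<le> (norm x * norm y)^2" by (simp only: b_def power_mult_distrib)
  hence "cmod a \<le> norm x * norm y" by (rule power2_le_imp_le) simp
  thus ?thesis unfolding a_def .
qed


lemma cinner_self_Re: "Re (cinner x x) = (norm (x::'a::complex_hilbert_space))^2"
  by (simp add: cinner_self)

lemma cinner_self_Im: "Im (cinner x (x::'a::complex_hilbert_space)) = 0"
  by (simp add: cinner_self)

lemma op_add: "bounded_clinear_op T \<Longrightarrow> T (x + y) = T x + T y"
  unfolding bounded_clinear_op_def by blast

lemma op_scaleC: "bounded_clinear_op T \<Longrightarrow> T (scaleC c x) = scaleC c (T x)"
  unfolding bounded_clinear_op_def by blast

lemma op_zero: "bounded_clinear_op T \<Longrightarrow> T 0 = 0"
  using op_add[of T 0 0] by simp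

lemma op_minus: "bounded_clinear_op T \<Longrightarrow> T (- x) = - T x"
  using op_add[of T x "-x"] op_zero[of T] by (simp add: eq_neg_iff_add_eq_0 add.commute)

lemma op_diff: "bounded_clinear_op T \<Longrightarrow> T (x - y) = T x - T y"
  using op_add[of T x "-y"] op_minus[of T y] by simp

lemma op_comp: "bounded_clinear_op S \<Longrightarrow> bounded_clinear_op T \<Longrightarrow> bounded_clinear_op (S \<circ> T)"
proof -
  assume S: "bounded_clinear_op S" and T: "bounded_clinear_op T"
  obtain K1 where K1: "\<forall>x. norm (S x) \<le> norm x * K1" using S unfolding bounded_clinear_op_def by blast
  obtain K2 where K2: "\<forall>x. norm (T x) \<le> norm x * K2" using T unfolding bounded_clinear_op_def by blast
  have "\<forall>x. norm (S (T x)) \<le> norm x * (K2 * \<bar>K1\<bar>)"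
  proof
    fix x
    have "norm (S (T x)) \<le> norm (T x) * K1" using K1 by blast
    also have "\<dots> \<le> norm (T x) * \<bar>K1\<bar>" by (simp add: mult_left_mono)
    also have "\<dots> \<le> norm x * K2 * \<bar>K1\<bar>" using K2 by (simp add: mult_right_mono)
    finally show "norm (S (T x)) \<le> norm x * (K2 * \<bar>K1\<bar>)" by (simp add: mult.assoc)
  qed
  then show ?thesis using S T unfolding bounded_clinear_op_def comp_def by auto
qed

lemma pos_clinear: "positive_op A \<Longrightarrow> bounded_clinear_op A"
  unfolding positive_op_def by blast

lemma pos_Im: "positive_op A \<Longrightarrow> Im (cinner (A z) z) = 0"
  unfolding positive_op_def by blast

lemma pos_Re: "positive_op A \<Longrightarrow> 0 \<le> Re (cinner (A z) z)"
  unfolding positive_op_def by blast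

lemma herm_aux: assumes "positive_op A"
  shows "Im (cinner (A u) v + cinner (A v) u) = 0"
proof -
  have L: "bounded_clinear_op A" using assms by (rule pos_clinear)
  have "cinner (A (u + v)) (u + v) = cinner (A u) u + cinner (A v) v + (cinner (A u) v + cinner (A v) u)"
    by (simp add: op_add[OF L] cinner_add_left cinner_add_right)
  hence "Im (cinner (A (u + v)) (u + v)) = Im (cinner (A u) u) + Im (cinner (A v) v) + Im (cinner (A u) v + cinner (A v) u)"
    by simp
  thus ?thesis using pos_Im[OF assms] by simp
qed

lemma hermitian: assumes "positive_op A"
  shows "cinner (A w) z = cnj (cinner (A z) w)"
proof -
  have L: "bounded_clinear_op A" using assms by (rule pos_clinear)
  define p where "p = cinner (A z) w"
  define q where "q = cinner (A w) z"
  have h1: "Im p + Im q = 0" using herm_aux[OF assms, of z w] unfolding p_def q_def by simp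
  have h2: "Im (cinner (A z) (scaleC \<i> w) + cinner (A (scaleC \<i> w)) z) = 0"
    by (rule herm_aux[OF assms])
  have "cinner (A z) (scaleC \<i> w) + cinner (A (scaleC \<i> w)) z = cnj \<i> * p + \<i> * q"
    unfolding p_def q_def by (simp add: op_scaleC[OF L] cinner_scaleC_left cinner_scaleC_right)
  with h2 have h3: "Re q - Re p = 0" by simp
  show ?thesis unfolding p_def[symmetric] q_def[symmetric] using h1 h3
    by (simp add: complex_eq_iff)
qed


lemma expand_q:
  assumes "positive_op A"
  shows "cinner (A (v + scaleC t u)) (v + scaleC t u) =
    cinner (A v) v + (cnj t * cinner (A v) u + t * cnj (cinner (A v) u)) + t * cnj t * cinner (A u) u"
proof -
  have L: "bounded_clinear_op A" using assms by (rule pos_clinear)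
  have "cinner (A (v + scaleC t u)) (v + scaleC t u) =
    cinner (A v) v + cnj t * cinner (A v) u + t * cinner (A u) v + t * (cnj t * cinner (A u) u)"
    by (simp add: op_add[OF L] op_scaleC[OF L] cinner_add_left cinner_add_right
        cinner_scaleC_left cinner_scaleC_right algebra_simps)
  moreover have "cinner (A u) v = cnj (cinner (A v) u)" by (rule hermitian[OF assms])
  ultimately show ?thesis by (simp add: algebra_simps)
qed

lemma var_lemma:
  assumes A: "positive_op A"
    and H: "\<And>t. Re (cinner (A v) v) \<le> Re (cinner (A (v + scaleC t u)) (v + scaleC t u))"
  shows "cinner (A v) u = 0"
proof -
  define a where "a = cinner (A v) u"
  define Q where "Q = Re (cinner (A u) u)"
  define n where "n = (cmod a)^2"
  define s where "s = 1 / (Q + 1)"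
  have Q0: "Q \<ge> 0" unfolding Q_def by (rule pos_Re[OF A])
  have s0: "s > 0" unfolding s_def using Q0 by simp
  have sQ: "s * Q < 1" unfolding s_def using Q0 by (simp add: field_simps)
  have n0: "n \<ge> 0" unfolding n_def by simp
  define t where "t = - (complex_of_real s * a)"
  have aa: "cnj a * a = complex_of_real n" unfolding n_def
    using complex_norm_square[of a] by (simp add: mult.commute)
  have aa2: "a * cnj a = complex_of_real n" unfolding n_def
    using complex_norm_square[of a] by simp
  have c1: "cnj t * a = - complex_of_real (s * n)" unfolding t_def using aa
    by (simp add: mult.assoc)
  have c2: "t * cnj a = - complex_of_real (s * n)" unfolding t_def using aa2
    by (simp add: mult.assoc)
  have c3: "t * cnj t = complex_of_real (s * s * n)" unfolding t_def using aa2
    by (simp add: algebra_simps)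
  have E: "cinner (A (v + scaleC t u)) (v + scaleC t u) =
      cinner (A v) v + (- complex_of_real (s * n) + - complex_of_real (s * n))
      + complex_of_real (s * s * n) * cinner (A u) u"
    unfolding expand_q[OF A] a_def[symmetric] c1 c2 c3 by (rule refl)
  have "Re (cinner (A (v + scaleC t u)) (v + scaleC t u)) = Re (cinner (A v) v) - 2 * s * n + s * s * n * Q"
    unfolding E Q_def by simp
  with H[of t] have "0 \<le> - 2 * s * n + s * s * n * Q" by simp
  moreover have "s * s * n * Q \<le> s * n"
  proof -
    have "s * s * n * Q = (s * n) * (s * Q)" by (simp add: algebra_simps)
    also have "\<dots> \<le> (s * n) * 1" using sQ s0 n0 by (intro mult_left_mono) auto
    finally show ?thesis by simp
  qed
  ultimately have "s * n \<le> 0" by linarith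
  hence "n \<le> 0" using s0 by (simp add: mult_le_0_iff)
  hence "cmod a = 0" unfolding n_def by simp
  thus ?thesis unfolding a_def by simp
qed

lemma pos_zero:
  assumes A: "positive_op A" and Z: "Re (cinner (A z) z) = 0"
  shows "A z = 0"
proof -
  have "\<And>u. cinner (A z) u = 0"
  proof (rule var_lemma[OF A])
    fix u t show "Re (cinner (A z) z) \<le> Re (cinner (A (z + scaleC t u)) (z + scaleC t u))"
      using Z pos_Re[OF A] by simp
  qed
  thus ?thesis using cinner_eq_zero_iff by blast
qed

lemma pos_id: "positive_op (id :: 'a::complex_hilbert_space \<Rightarrow> 'a)"
  unfolding positive_op_def bounded_clinear_op_def
  by (auto simp: cinner_self_Im cinner_pos intro: exI[of _ 1])


lemma norm_add_sq: "(norm (p + q))^2 = (norm p)^2 + (norm q)^2 + 2 * Re (cinner p (q::'a::complex_hilbert_space))"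
proof -
  have "cinner (p + q) (p + q) = cinner p p + cinner q q + (cinner p q + cinner q p)"
    by (simp add: cinner_add_left cinner_add_right algebra_simps)
  moreover have "Re (cinner q p) = Re (cinner p q)" by (metis cinner_conj_sym complex_cnj_cnj cnj.sel(1))
  ultimately show ?thesis by (simp add: cinner_self_Re[symmetric])
qed

lemma norm_diff_sq: "(norm (p - q))^2 = (norm p)^2 + (norm q)^2 - 2 * Re (cinner p (q::'a::complex_hilbert_space))"
  using norm_add_sq[of p "-q"] by (simp add: cinner_minus_right)

lemma riesz:
  fixes f :: "'a::complex_hilbert_space \<Rightarrow> complex"
  assumes add: "\<And>x y. f (x + y) = f x + f y"
    and sc: "\<And>c x. f (scaleC c x) = c * f x"
    and bd: "\<And>x. cmod (f x) \<le> norm x * K"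
  shows "\<exists>u. \<forall>x. f x = cinner x u"
proof (cases "\<forall>x. f x = 0")
  case True then show ?thesis by (intro exI[of _ 0]) simp
next
  case False
  then obtain x0 where x0: "f x0 \<noteq> 0" by blast
  have f0: "f 0 = 0" using add[of 0 0] by simp
  have fR: "f (scaleR r x) = scaleR r (f x)" for r x
    by (simp add: scaleR_scaleC sc scaleR_conv_of_real)
  have fminus: "f (x - y) = f x - f y" for x y
  proof -
    have "f (- y) = - f y" using fR[of "-1" y] by simp
    thus ?thesis using add[of x "-y"] by simp
  qed
  have BL: "bounded_linear f" by (rule bounded_linear_intro[OF add fR bd])
  define C where "C = {x. f x = 1}"
  have e1: "scaleC (1 / f x0) x0 \<in> C" unfolding C_def using x0 by (simp add: sc)
  hence Cne: "C \<noteq> {}" by blast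
  define N where "N = (\<lambda>x::'a. (norm x)^2) ` C"
  define d where "d = Inf N"
  have Nne: "N \<noteq> {}" using Cne unfolding N_def by blast
  have bddN: "bdd_below N" unfolding N_def by (rule bdd_belowI[of _ 0]) auto
  have lower: "d \<le> (norm x)^2" if "x \<in> C" for x
    unfolding d_def by (rule cInf_lower) (use that bddN N_def in auto)
  have "\<exists>x. x \<in> C \<and> (norm x)^2 < d + inverse (real (Suc n))" for n
  proof -
    have "Inf N < d + inverse (real (Suc n))" unfolding d_def by simp
    from cInf_lessD[OF Nne this] show ?thesis unfolding N_def by blast
  qed
  then obtain s where sC: "\<And>n. s n \<in> C" and sl: "\<And>n. (norm (s n))^2 < d + inverse (real (Suc n))"
    by metis
  have fs: "f (s n) = 1" for n using sC[of n] unfolding C_def by simp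
  have par: "(norm (s m - s n))^2 \<le> 2 * inverse (real (Suc m)) + 2 * inverse (real (Suc n))" for m n
  proof -
    define h where "h = scaleR (1/2) (s m + s n)"
    have "f h = 1" unfolding h_def using fR add fs by (simp add: scaleR_conv_of_real)
    hence "d \<le> (norm h)^2" using lower C_def by blast
    moreover have "(norm h)^2 = (norm (s m + s n))^2 / 4" unfolding h_def
      by (simp add: power_divide)
    ultimately have "4 * d \<le> (norm (s m + s n))^2" by simp
    moreover have "(norm (s m - s n))^2 + (norm (s m + s n))^2 = 2 * (norm (s m))^2 + 2 * (norm (s n))^2"
      using norm_add_sq[of "s m" "s n"] norm_diff_sq[of "s m" "s n"] by simp
    ultimately show ?thesis using sl[of m] sl[of n] by linarith
  qed
  have Cs: "Cauchy s"
  proof (rule CauchyI)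
    fix e :: real assume e: "0 < e"
    obtain M where M: "4 / (e^2) < real M" using reals_Archimedean2 by blast
    have e2: "e^2 > 0" using e by simp
    show "\<exists>M. \<forall>m\<ge>M. \<forall>n\<ge>M. norm (s m - s n) < e"
    proof (intro exI allI impI)
      fix m n assume m: "M \<le> m" and n: "M \<le> n"
      have im: "inverse (real (Suc m)) \<le> inverse (real (Suc M))" using m by (simp add: field_simps)
      have inn: "inverse (real (Suc n)) \<le> inverse (real (Suc M))" using n by (simp add: field_simps)
      have "4 / e^2 < real (Suc M)" using M by simp
      hence "4 < e^2 * real (Suc M)" using e2 by (simp add: field_simps)
      hence "4 * inverse (real (Suc M)) < e^2" by (simp add: field_simps)
      hence "(norm (s m - s n))^2 < e^2" using par[of m n] im inn by linarith
      thus "norm (s m - s n) < e" using e by (simp add: power_less_imp_less_base)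
    qed
  qed
  then obtain u0 where lim: "s \<longlonglongrightarrow> u0" using Cauchy_convergent_iff convergent_def by blast
  have "(\<lambda>n. f (s n)) \<longlonglongrightarrow> f u0" by (rule bounded_linear.tendsto[OF BL lim])
  hence "(\<lambda>n. 1::complex) \<longlonglongrightarrow> f u0" using fs by simp
  hence fu0: "f u0 = 1" using LIMSEQ_unique tendsto_const by blast
  have minim: "(norm u0)^2 \<le> (norm x)^2" if "x \<in> C" for x
  proof -
    have l1: "(\<lambda>n. (norm (s n))^2) \<longlonglongrightarrow> (norm u0)^2" by (intro tendsto_intros lim)
    have l2: "(\<lambda>n. d + inverse (real (Suc n))) \<longlonglongrightarrow> d + 0"
      by (intro tendsto_intros LIMSEQ_inverse_real_of_nat)
    have "(norm u0)^2 \<le> d + 0"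
      by (rule LIMSEQ_le[OF l1 l2]) (use sl less_imp_le in blast)
    thus ?thesis using lower[OF that] by linarith
  qed
  have orth: "cinner u0 k = 0" if k: "f k = 0" for k
  proof -
    have "cinner (id u0) k = 0"
    proof (rule var_lemma[OF pos_id])
      fix t
      have "u0 + scaleC t k \<in> C" unfolding C_def using fu0 k add sc by simp
      hence "(norm u0)^2 \<le> (norm (u0 + scaleC t k))^2" by (rule minim)
      thus "Re (cinner (id u0) u0) \<le> Re (cinner (id (u0 + scaleC t k)) (u0 + scaleC t k))"
        by (simp add: cinner_self_Re)
    qed
    thus ?thesis by simp
  qed
  have u0nz: "u0 \<noteq> 0" using fu0 f0 by auto
  define NN where "NN = cinner u0 u0"
  have NNnz: "NN \<noteq> 0" unfolding NN_def using u0nz cinner_eq_zero_iff by blast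
  show ?thesis
  proof (intro exI allI)
    fix x
    define k where "k = x - scaleC (f x) u0"
    have fk: "f k = 0" unfolding k_def using fminus sc fu0 by simp
    have "cinner k u0 = 0" using orth[OF fk] by (metis cinner_conj_sym complex_cnj_zero)
    moreover have "x = k + scaleC (f x) u0" unfolding k_def by simp
    ultimately have xu: "cinner x u0 = f x * NN"
      unfolding NN_def by (metis add_0 cinner_add_left cinner_scaleC_left)
    have "cinner x (scaleC (inverse (cnj NN)) u0) = inverse NN * (f x * NN)"
      by (simp add: cinner_scaleC_right xu)
    also have "\<dots> = f x" using NNnz by simp
    finally show "f x = cinner x (scaleC (inverse (cnj NN)) u0)" by simp
  qed
qed

lemma adjoint_exists:
  assumes T: "bounded_clinear_op T"
  shows "\<exists>S. \<forall>x y. cinner (T x) y = cinner x (S y)"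
proof -
  obtain K where K: "\<And>x. norm (T x) \<le> norm x * K" using T unfolding bounded_clinear_op_def by blast
  have "\<forall>y. \<exists>u. \<forall>x. cinner (T x) y = cinner x u"
  proof
    fix y
    show "\<exists>u. \<forall>x. cinner (T x) y = cinner x u"
    proof (rule riesz)
      fix x z show "cinner (T (x + z)) y = cinner (T x) y + cinner (T z) y"
        by (simp add: op_add[OF T] cinner_add_left)
    next
      fix c x show "cinner (T (scaleC c x)) y = c * cinner (T x) y"
        by (simp add: op_scaleC[OF T] cinner_scaleC_left)
    next
      fix x
      have "cmod (cinner (T x) y) \<le> norm (T x) * norm y" by (rule cauchy_schwarz)
      also have "\<dots> \<le> norm x * K * norm y" using K by (simp add: mult_right_mono)
      finally show "cmod (cinner (T x) y) \<le> norm x * (K * norm y)" by (simp add: mult.assoc)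
    qed
  qed
  thus ?thesis by metis
qed

lemma adjoint_char:
  assumes "bounded_clinear_op T"
  shows "cinner (T x) y = cinner x (adjoint_op T y)"
proof -
  have "\<forall>x y. cinner (T x) y = cinner x (adjoint_op T y)"
    unfolding adjoint_op_def by (rule someI_ex[OF adjoint_exists[OF assms]])
  thus ?thesis by blast
qed


lemma seminorm_le_iff:
  assumes "positive_op A"
  shows "A_seminorm A x \<le> A_seminorm A y \<longleftrightarrow> Re (cinner (A x) x) \<le> Re (cinner (A y) y)"
  unfolding A_seminorm_def using pos_Re[OF assms] by simp

theorem mainTheorem17:
  fixes A1 A2 B G :: "'a::complex_hilbert_space \<Rightarrow> 'a"
  assumes "separable_space (euclidean :: 'a topology)"
    and "positive_op A1" and "positive_op A2"
    and "bounded_clinear_op B" and "closed (range B)"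
    and "bounded_clinear_op G"
    and "is_AA_inverse A1 A2 B G"
  shows "(A1 \<circ> B \<circ> G \<circ> B = A1 \<circ> B \<and> A1 \<circ> B \<circ> G = adjoint_op (B \<circ> G) \<circ> A1) \<and>
         (A2 \<circ> G \<circ> B \<circ> G = A2 \<circ> G \<and> A2 \<circ> G \<circ> B = adjoint_op (G \<circ> B) \<circ> A2)"
proof -
  have A1P: "positive_op A1" and A2P: "positive_op A2" and BL: "bounded_clinear_op B"
    and GL: "bounded_clinear_op G" using assms by auto
  have A1L: "bounded_clinear_op A1" and A2L: "bounded_clinear_op A2"
    using A1P A2P by (auto intro: pos_clinear)
  have inv: "\<And>y. is_A_LSS A1 B y (G y)" using assms(7) unfolding is_AA_inverse_def is_A_inverse_def by blast
  have mn: "\<And>y x0. is_A_LSS A1 B y x0 \<Longrightarrow> A_seminorm A2 (G y) \<le> A_seminorm A2 x0"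
    using assms(7) unfolding is_AA_inverse_def by blast
  have NE: "cinner (A1 (y - B (G y))) (B w) = 0" for y w
  proof (rule var_lemma[OF A1P])
    fix t
    have "A_seminorm A1 (y - B (G y)) \<le> A_seminorm A1 (y - B (G y - scaleC t w))"
      using inv[of y] unfolding is_A_LSS_def by blast
    moreover have "y - B (G y - scaleC t w) = (y - B (G y)) + scaleC t (B w)"
      by (simp add: op_diff[OF BL] op_scaleC[OF BL])
    ultimately show "Re (cinner (A1 (y - B (G y))) (y - B (G y))) \<le>
        Re (cinner (A1 (y - B (G y) + scaleC t (B w))) (y - B (G y) + scaleC t (B w)))"
      using seminorm_le_iff[OF A1P] by simp
  qed
  have P1a: "A1 (B (G (B x))) = A1 (B x)" for x
  proof -
    define z where "z = B (G (B x)) - B x"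
    have z2: "B (G (B x) - x) = z" unfolding z_def by (simp add: op_diff[OF BL])
    have z3: "B x - B (G (B x)) = - z" unfolding z_def by simp
    have "cinner (A1 (- z)) z = 0" using NE[of "B x" "G (B x) - x"] unfolding z2 z3 .
    hence "Re (cinner (A1 z) z) = 0" by (simp add: op_minus[OF A1L] cinner_minus_left)
    hence "A1 z = 0" by (rule pos_zero[OF A1P])
    thus ?thesis unfolding z_def by (simp add: op_diff[OF A1L])
  qed
  have P1b: "adjoint_op (B \<circ> G) (A1 z) = A1 (B (G z))" for z
  proof (rule cinner_eq_all)
    fix x
    have BGL: "bounded_clinear_op (B \<circ> G)" by (rule op_comp[OF BL GL])
    define P where "P = cinner (A1 (B (G z))) (B (G x))"
    have i1: "cinner (A1 (B (G z))) (x - B (G x)) = 0"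
      using hermitian[OF A1P, of "B (G z)" "x - B (G x)"] NE[of x "G z"] by simp
    have i: "cinner (A1 (B (G z))) x = P"
      using i1 unfolding P_def by (simp add: cinner_diff_right)
    have ii1: "cinner (A1 (z - B (G z))) (B (G x)) = 0" by (rule NE)
    have ii: "cinner (A1 z) (B (G x)) = P"
      using ii1 unfolding P_def by (simp add: op_diff[OF A1L] cinner_diff_left)
    have "cinner x (adjoint_op (B \<circ> G) (A1 z)) = cinner (B (G x)) (A1 z)"
      using adjoint_char[OF BGL, of x "A1 z"] by simp
    also have "\<dots> = cnj P" using ii by (metis cinner_conj_sym)
    also have "\<dots> = cinner x (A1 (B (G z)))" using i by (metis cinner_conj_sym)
    finally show "cinner x (adjoint_op (B \<circ> G) (A1 z)) = cinner x (A1 (B (G z)))" .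
  qed
  have shift: "is_A_LSS A1 B y (G y + n)" if n: "A1 (B n) = 0" for y n
  proof -
    define v where "v = y - B (G y)"
    have e: "y - B (G y + n) = v - B n" unfolding v_def by (simp add: op_add[OF BL])
    have h: "cinner (A1 v) (B n) = 0" using hermitian[OF A1P, of v "B n"] n by simp
    have "cinner (A1 (v - B n)) (v - B n) = cinner (A1 v) v"
      using h n by (simp add: op_diff[OF A1L] cinner_diff_left cinner_diff_right)
    hence "A_seminorm A1 (y - B (G y + n)) = A_seminorm A1 (y - B (G y))"
      unfolding e A_seminorm_def v_def by simp
    thus ?thesis using inv[of y] unfolding is_A_LSS_def by simp
  qed
  have MN: "cinner (A2 (G y)) n = 0" if n: "A1 (B n) = 0" for y n
  proof (rule var_lemma[OF A2P])
    fix t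
    have "A1 (B (scaleC t n)) = 0" by (simp add: op_scaleC[OF BL] op_scaleC[OF A1L] n)
    hence "is_A_LSS A1 B y (G y + scaleC t n)" by (rule shift)
    hence "A_seminorm A2 (G y) \<le> A_seminorm A2 (G y + scaleC t n)" by (rule mn)
    thus "Re (cinner (A2 (G y)) (G y)) \<le> Re (cinner (A2 (G y + scaleC t n)) (G y + scaleC t n))"
      using seminorm_le_iff[OF A2P] by simp
  qed
  have P2a: "A2 (G (B (G y))) = A2 (G y)" for y
  proof -
    define n where "n = G (B (G y)) - G y"
    have nB: "A1 (B n) = 0" unfolding n_def
      by (simp add: op_diff[OF BL] op_diff[OF A1L] P1a)
    have "cinner (A2 n) n = cinner (A2 (G (B (G y)))) n - cinner (A2 (G y)) n"
      unfolding n_def by (simp add: op_diff[OF A2L] cinner_diff_left)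
    also have "\<dots> = 0" using MN[OF nB, of "B (G y)"] MN[OF nB, of y] by simp
    finally have "Re (cinner (A2 n) n) = 0" by simp
    hence "A2 n = 0" by (rule pos_zero[OF A2P])
    thus ?thesis unfolding n_def by (simp add: op_diff[OF A2L])
  qed
  have P2b: "adjoint_op (G \<circ> B) (A2 z) = A2 (G (B z))" for z
  proof (rule cinner_eq_all)
    fix x
    have GBL: "bounded_clinear_op (G \<circ> B)" by (rule op_comp[OF GL BL])
    define P where "P = cinner (A2 (G (B z))) (G (B x))"
    have nx: "A1 (B (x - G (B x))) = 0" by (simp add: op_diff[OF BL] op_diff[OF A1L] P1a)
    have nz: "A1 (B (z - G (B z))) = 0" by (simp add: op_diff[OF BL] op_diff[OF A1L] P1a)
    have i1: "cinner (A2 (G (B z))) (x - G (B x)) = 0" by (rule MN[OF nx])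
    have i: "cinner (A2 (G (B z))) x = P"
      using i1 unfolding P_def by (simp add: cinner_diff_right)
    have ii1: "cinner (A2 (z - G (B z))) (G (B x)) = 0"
      using hermitian[OF A2P, of "z - G (B z)" "G (B x)"] MN[OF nz, of "B x"] by simp
    have ii: "cinner (A2 z) (G (B x)) = P"
      using ii1 unfolding P_def by (simp add: op_diff[OF A2L] cinner_diff_left)
    have "cinner x (adjoint_op (G \<circ> B) (A2 z)) = cinner (G (B x)) (A2 z)"
      using adjoint_char[OF GBL, of x "A2 z"] by simp
    also have "\<dots> = cnj P" using ii by (metis cinner_conj_sym)
    also have "\<dots> = cinner x (A2 (G (B z)))" using i by (metis cinner_conj_sym)
    finally show "cinner x (adjoint_op (G \<circ> B) (A2 z)) = cinner x (A2 (G (B z)))" .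
  qed
  show ?thesis
    by (intro conjI ext) (simp_all add: P1a P1b P2a P2b)
qed

end
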